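(* Let $P$ be a positive, completely labelled causal logic program and $\pi(p)$ a proof of atom $p$ with respect to $P$. Then $\mathrm{graph}(\pi(p))\in T_P\!\uparrow\!h(p)$, where $h=\mathrm{height}(\pi(p))$.
   Context: Causal graphs: reflexively–transitively closed directed graphs on labels; $G\le G'$ iff $G\supseteq G'$; $G*G'=(G\cup G')^*$, $G\cdot G'$ the closure of the graph with vertices $V\cup V'$ and edges $E\cup E'\cup(V\times V')$. Causal values: down-sets of causal graphs; $*$ intersection, $+$ union, $U\cdot U'={\downarrow}\{G\cdot G'\}$; label $l$ denotes ${\downarrow}$ of the graph with only edge $(l,l)$. Positive completely labelled program: rules $l:H\leftarrow B_1,\dots,B_n$ with atoms $B_i$, every rule labelled, labels pairwise distinct. $T_P(I)(p)=\sum\{(I(B_1)*\dots*I(B_n))\cdot t\mid(t:p\leftarrow B_1,\dots,B_n)\in P\}$; $T_P\!\uparrow\!0=$ all atoms $0$, $T_P\!\uparrow\!(k+1)=T_P(T_P\!\uparrow\!k)$. A proof of $p$ is a derivation tree $\frac{\pi(B_1)\cdots\pi(B_n)}{p}(R)$ with $R\in P$ of head $p$ and body $\{B_1,\dots,B_n\}$ (antecedent $\top$ if $n=0$). $\mathrm{graph}(\pi)$ is the reflexive–transitive closure of the graph whose vertices are the labels of all rules used in $\pi$ and which has, for each sub-derivation using a rule labelled $m$ with immediate subproofs whose last rules are labelled $l_i$, the edges $(l_i,m)$. $\mathrm{height}(\pi)=1+\max\{\mathrm{height}(\pi')\mid\pi'\text{ an immediate subproof of }\pi\}$, with height $1$ when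 the antecedent is $\top$. *)

theory Defs
  imports Main
begin

text \<open>A causal graph is represented by its edge relation; vertices are the
field of the relation (every vertex carries its reflexive loop).  It must be
reflexively-transitively closed on its vertices.\<close>

definition causal_graph :: "('l \<times> 'l) set \<Rightarrow> bool" where
  "causal_graph G \<longleftrightarrow> trans G \<and> Id_on (Field G) \<subseteq> G"

definition gclose :: "'l set \<Rightarrow> ('l \<times> 'l) set \<Rightarrow> ('l \<times> 'l) set" where
  "gclose V E = E\<^sup>+ \<union> Id_on V"

definition cg_le :: "('l \<times> 'l) set \<Rightarrow> ('l \<times> 'l) set \<Rightarrow> bool" where
  "cg_le G G' \<longleftrightarrow> G' \<subseteq> G"

definition cg_prod :: "('l \<times> 'l) set \<Rightarrow> ('l \<times> 'l) set \<Rightarrow> ('l \<times> 'l) set" where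
  "cg_prod G G' = gclose (Field G \<union> Field G') (G \<union> G' \<union> (Field G \<times> Field G'))"

definition down :: "('l \<times> 'l) set set \<Rightarrow> ('l \<times> 'l) set set" where
  "down D = {G'. causal_graph G' \<and> (\<exists>G\<in>D. cg_le G' G)}"

definition val_one :: "('l \<times> 'l) set set" where
  "val_one = {G. causal_graph G}"

definition val_zero :: "('l \<times> 'l) set set" where
  "val_zero = {}"

definition val_prod :: "('l \<times> 'l) set set \<Rightarrow> ('l \<times> 'l) set set \<Rightarrow> ('l \<times> 'l) set set" where
  "val_prod U U' = down {cg_prod G G' | G G'. G \<in> U \<and> G' \<in> U'}"

definition lab_val :: "'l \<Rightarrow> ('l \<times> 'l) set set" where
  "lab_val l = down {{(l, l)}}"

datatype ('a, 'l) rule = Rule (rlabel: 'l) (rhead: 'a) (rbody: "'a list")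

definition completely_labelled :: "('a, 'l) rule set \<Rightarrow> bool" where
  "completely_labelled P \<longleftrightarrow> (\<forall>r1\<in>P. \<forall>r2\<in>P. rlabel r1 = rlabel r2 \<longrightarrow> r1 = r2)"

text \<open>Product (intersection) of the values of the body atoms; empty product is 1.\<close>
definition body_val :: "('a \<Rightarrow> ('l \<times> 'l) set set) \<Rightarrow> 'a list \<Rightarrow> ('l \<times> 'l) set set" where
  "body_val I bs = val_one \<inter> (\<Inter>b\<in>set bs. I b)"

definition TP :: "('a, 'l) rule set \<Rightarrow> ('a \<Rightarrow> ('l \<times> 'l) set set) \<Rightarrow> 'a \<Rightarrow> ('l \<times> 'l) set set" where
  "TP P I p = (\<Union>{val_prod (body_val I (rbody r)) (lab_val (rlabel r)) | r. r \<in> P \<and> rhead r = p})"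

definition TP_iter :: "('a, 'l) rule set \<Rightarrow> nat \<Rightarrow> 'a \<Rightarrow> ('l \<times> 'l) set set" where
  "TP_iter P k = (TP P ^^ k) (\<lambda>_. val_zero)"

datatype ('a, 'l) ptree = Node "('a, 'l) rule" "('a, 'l) ptree list"

fun root_rule :: "('a, 'l) ptree \<Rightarrow> ('a, 'l) rule" where
  "root_rule (Node R _) = R"

fun is_proof :: "('a, 'l) rule set \<Rightarrow> 'a \<Rightarrow> ('a, 'l) ptree \<Rightarrow> bool" where
  "is_proof P p (Node R subs) \<longleftrightarrow>
     R \<in> P \<and> rhead R = p \<and> list_all2 (\<lambda>b s. is_proof P b s) (rbody R) subs"

fun prf_labels :: "('a, 'l) ptree \<Rightarrow> 'l set" where
  "prf_labels (Node R subs) = insert (rlabel R) (\<Union>s\<in>set subs. prf_labels s)"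

fun prf_edges :: "('a, 'l) ptree \<Rightarrow> ('l \<times> 'l) set" where
  "prf_edges (Node R subs) =
     {(rlabel (root_rule s), rlabel R) | s. s \<in> set subs} \<union> (\<Union>s\<in>set subs. prf_edges s)"

definition prf_graph :: "('a, 'l) ptree \<Rightarrow> ('l \<times> 'l) set" where
  "prf_graph \<pi> = gclose (prf_labels \<pi>) (prf_edges \<pi>)"

fun height :: "('a, 'l) ptree \<Rightarrow> nat" where
  "height (Node R subs) = Suc (fold max (map height subs) 0)"

end

theory Submission
  imports Defs
begin

lemma root_in_labels: "rlabel (root_rule s) \<in> prf_labels s"
  by (cases s) auto

lemma field_edges: "Field (prf_edges s) \<subseteq> prf_labels s"
proof (induction s)
  case (Node R subs)
  show ?case
  proof
    fix x assume "x \<in> Field (prf_edges (Node R subs))"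
    then show "x \<in> prf_labels (Node R subs)"
      using Node root_in_labels unfolding Field_def by fastforce
  qed
qed

lemma reach_root: "v \<in> prf_labels s \<Longrightarrow> (v, rlabel (root_rule s)) \<in> (prf_edges s)\<^sup>*"
proof (induction s arbitrary: v)
  case (Node R subs)
  show ?case
  proof (cases "v = rlabel R")
    case True then show ?thesis by simp
  next
    case False
    then obtain s where s: "s \<in> set subs" "v \<in> prf_labels s" using Node.prems by auto
    have "(v, rlabel (root_rule s)) \<in> (prf_edges s)\<^sup>*" using Node.IH[OF s] .
    moreover have "prf_edges s \<subseteq> prf_edges (Node R subs)" using s by auto
    ultimately have "(v, rlabel (root_rule s)) \<in> (prf_edges (Node R subs))\<^sup>*"
      using rtrancl_mono by (meson subsetD)
    moreover have "(rlabel (root_rule s), rlabel R) \<in> prf_edges (Node R subs)" using s by auto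
    ultimately have "(v, rlabel R) \<in> (prf_edges (Node R subs))\<^sup>*" by (rule rtrancl_into_rtrancl)
    then show ?thesis by simp
  qed
qed

lemma gclose_field: "Field E \<subseteq> V \<Longrightarrow> Field (gclose V E) = V"
  unfolding gclose_def Field_def by (auto simp: Id_on_def) (metis Domain.intros trancl_domain subsetD, metis Range.intros trancl_range subsetD)

lemma gclose_causal: "Field E \<subseteq> V \<Longrightarrow> causal_graph (gclose V E)"
  unfolding causal_graph_def
proof
  assume F: "Field E \<subseteq> V"
  show "trans (gclose V E)" unfolding gclose_def trans_def by (auto intro: trancl_trans)
  show "Id_on (Field (gclose V E)) \<subseteq> gclose V E" using gclose_field[OF F] unfolding gclose_def by auto
qed

lemma gclose_mono: "V \<subseteq> W \<Longrightarrow> E \<subseteq> F \<Longrightarrow> gclose V E \<subseteq> gclose W F"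
  unfolding gclose_def using trancl_mono by blast

lemma gclose_sub: "X \<subseteq> gclose W Y \<Longrightarrow> gclose W X \<subseteq> gclose W Y"
proof -
  assume X: "X \<subseteq> gclose W Y"
  have t: "trans (gclose W Y)" unfolding gclose_def trans_def by (auto intro: trancl_trans)
  have "X\<^sup>+ \<subseteq> (gclose W Y)\<^sup>+" by (rule subsetI, erule trancl_mono, rule X)
  also have "\<dots> = gclose W Y" using t by (rule trancl_id)
  finally have "X\<^sup>+ \<subseteq> gclose W Y" .
  then show ?thesis unfolding gclose_def by auto
qed

lemma down_up: "x \<in> down D \<Longrightarrow> causal_graph y \<Longrightarrow> x \<subseteq> y \<Longrightarrow> y \<in> down D"
  unfolding down_def cg_le_def by auto

lemma TP_iter_Suc: "TP_iter P (Suc k) = TP P (TP_iter P k)"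
  unfolding TP_iter_def by simp

lemma TP_up: "x \<in> TP_iter P k q \<Longrightarrow> causal_graph y \<Longrightarrow> x \<subseteq> y \<Longrightarrow> y \<in> TP_iter P k q"
proof (cases k)
  case 0 assume "x \<in> TP_iter P k q" then show ?thesis using 0 by (simp add: TP_iter_def val_zero_def)
next
  case (Suc m)
  assume a: "x \<in> TP_iter P k q" "causal_graph y" "x \<subseteq> y"
  then show ?thesis unfolding Suc TP_iter_Suc TP_def val_prod_def
    using down_up by blast
qed

lemma body_val_mono: "(\<And>q. I q \<subseteq> J q) \<Longrightarrow> body_val I bs \<subseteq> body_val J bs"
  unfolding body_val_def by auto

lemma val_prod_mono: "U \<subseteq> U2 \<Longrightarrow> val_prod U V \<subseteq> val_prod U2 V"
  unfolding val_prod_def down_def by auto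

lemma TP_mono: "(\<And>q. I q \<subseteq> J q) \<Longrightarrow> TP P I p \<subseteq> TP P J p"
proof -
  assume a: "\<And>q. I q \<subseteq> J q"
  have "\<And>r. val_prod (body_val I (rbody r)) (lab_val (rlabel r)) \<subseteq> val_prod (body_val J (rbody r)) (lab_val (rlabel r))"
    by (rule val_prod_mono, rule body_val_mono, rule a)
  then show ?thesis unfolding TP_def by auto
qed

lemma TP_iter_Suc_mono: "TP_iter P k q \<subseteq> TP_iter P (Suc k) q"
proof (induction k arbitrary: q)
  case 0 then show ?case by (simp add: TP_iter_def val_zero_def)
next
  case (Suc k)
  have "TP P (TP_iter P k) q \<subseteq> TP P (TP_iter P (Suc k)) q"
    by (rule TP_mono) (use Suc in auto)
  then show ?case by (simp only: TP_iter_Suc)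
qed

lemma TP_iter_mono: "k \<le> m \<Longrightarrow> TP_iter P k q \<subseteq> TP_iter P m q"
proof (induction m rule: dec_induct)
  case base then show ?case by simp
next
  case (step n)
  from step.IH show ?case using TP_iter_Suc_mono[of P n q] by (rule order_trans)
qed

lemma fold_max_ge0: "(a::nat) \<le> fold max xs a"
proof (induction xs arbitrary: a)
  case Nil then show ?case by simp
next
  case (Cons y ys)
  have "a \<le> max y a" by simp
  also have "\<dots> \<le> fold max ys (max y a)" by (rule Cons.IH)
  finally show ?case by simp
qed

lemma fold_max_ge: "x \<in> set xs \<Longrightarrow> (x::nat) \<le> fold max xs a"
proof (induction xs arbitrary: a)
  case Nil then show ?case by simp
next
  case (Cons y ys)
  show ?case
  proof (cases "x = y")
    case True
    have "x \<le> max y a" using True by simp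
    also have "\<dots> \<le> fold max ys (max y a)" by (rule fold_max_ge0)
    finally show ?thesis by simp
  next
    case False
    then have "x \<in> set ys" using Cons.prems by simp
    then have "x \<le> fold max ys (max y a)" by (rule Cons.IH)
    then show ?thesis by simp
  qed
qed

theorem mainTheorem19:
  fixes P :: "('a, 'l) rule set" and p :: 'a and \<pi> :: "('a, 'l) ptree"
  assumes "completely_labelled P"
    and "is_proof P p \<pi>"
  shows "prf_graph \<pi> \<in> TP_iter P (height \<pi>) p"
  using assms(2)
proof (induction \<pi> arbitrary: p)
  case (Node R subs)
  define h where "h = fold max (map height subs) 0"
  define V where "V = (\<Union>s\<in>set subs. prf_labels s)"
  define E where "E = (\<Union>s\<in>set subs. prf_edges s)"
  define G where "G = gclose V E"
  define l where "l = rlabel R"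
  have pr: "R \<in> P" "rhead R = p" "list_all2 (\<lambda>b s. is_proof P b s) (rbody R) subs"
    using Node.prems by auto
  have FE: "Field E \<subseteq> V" unfolding E_def V_def using field_edges unfolding Field_def by fast
  have Gc: "causal_graph G" unfolding G_def using gclose_causal[OF FE] .
  have GF: "Field G = V" unfolding G_def using gclose_field[OF FE] .
  have FEpi: "Field (prf_edges (Node R subs)) \<subseteq> prf_labels (Node R subs)" by (rule field_edges)
  have pic: "causal_graph (prf_graph (Node R subs))"
    unfolding prf_graph_def using gclose_causal[OF FEpi] .
  have Gbody: "G \<in> body_val (TP_iter P h) (rbody R)"
    unfolding body_val_def val_one_def
  proof (intro IntI CollectI INT_I Gc)
    fix b assume "b \<in> set (rbody R)"
    then obtain i where i: "i < length (rbody R)" "rbody R ! i = b" by (auto simp: in_set_conv_nth)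
    let ?s = "subs ! i"
    have len: "length subs = length (rbody R)" using pr(3) list_all2_lengthD by metis
    have sin: "?s \<in> set subs" using i len by auto
    have isp: "is_proof P b ?s" using pr(3) i list_all2_nthD by fastforce
    have "prf_graph ?s \<in> TP_iter P (height ?s) b" using Node.IH[OF sin isp] .
    moreover have "height ?s \<le> h" unfolding h_def using fold_max_ge[of "height ?s" "map height subs" 0] sin by auto
    ultimately have a: "prf_graph ?s \<in> TP_iter P h b" using TP_iter_mono[of "height ?s" h P b] by (meson subsetD)
    have "prf_graph ?s \<subseteq> G" unfolding prf_graph_def G_def V_def E_def
      by (rule gclose_mono) (use sin in auto)
    then show "G \<in> TP_iter P h b" using TP_up[OF a Gc] by blast
  qed
  have lv: "{(l,l)} \<in> lab_val (rlabel R)"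
    unfolding lab_val_def down_def cg_le_def causal_graph_def l_def
    by (auto simp: trans_def Field_def Id_on_def)
  have sub: "cg_prod G {(l,l)} \<subseteq> prf_graph (Node R subs)"
  proof -
    have Fl: "Field {(l,l)} = {l}" by (auto simp: Field_def)
    have lab: "prf_labels (Node R subs) = V \<union> {l}" unfolding V_def l_def by auto
    have "G \<subseteq> prf_graph (Node R subs)" unfolding G_def prf_graph_def V_def E_def
      by (rule gclose_mono) auto
    moreover have "(l,l) \<in> prf_graph (Node R subs)" unfolding prf_graph_def gclose_def l_def by auto
    moreover have "V \<times> {l} \<subseteq> prf_graph (Node R subs)"
    proof
      fix z assume "z \<in> V \<times> {l}"
      then obtain v s where z: "z = (v,l)" "s \<in> set subs" "v \<in> prf_labels s" unfolding V_def by auto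
      have "(v, rlabel (root_rule s)) \<in> (prf_edges s)\<^sup>*" using reach_root[OF z(3)] .
      moreover have "prf_edges s \<subseteq> prf_edges (Node R subs)" using z by auto
      ultimately have "(v, rlabel (root_rule s)) \<in> (prf_edges (Node R subs))\<^sup>*"
        using rtrancl_mono by (meson subsetD)
      moreover have "(rlabel (root_rule s), l) \<in> prf_edges (Node R subs)" using z l_def by auto
      ultimately have "(v,l) \<in> (prf_edges (Node R subs))\<^sup>+" by (rule rtrancl_into_trancl1)
      then show "z \<in> prf_graph (Node R subs)" unfolding prf_graph_def gclose_def z by auto
    qed
    ultimately have "G \<union> {(l,l)} \<union> Field G \<times> Field {(l,l)} \<subseteq> prf_graph (Node R subs)"
      unfolding GF Fl by blast
    then show ?thesis unfolding cg_prod_def GF Fl prf_graph_def lab[symmetric]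
      using gclose_sub unfolding prf_graph_def by blast
  qed
  have "prf_graph (Node R subs) \<in> val_prod (body_val (TP_iter P h) (rbody R)) (lab_val (rlabel R))"
    unfolding val_prod_def down_def cg_le_def using Gbody lv sub pic by blast
  then have "prf_graph (Node R subs) \<in> TP P (TP_iter P h) p"
    unfolding TP_def using pr by blast
  then show ?case unfolding h_def by (simp add: TP_iter_Suc)
qed

end
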